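(* $\bigcup_k\mathfrak{L}(\mathrm{rtDVA}(k))\subseteq\mathsf{TISP}(n^3,n)$.
   Context: $\mathfrak{L}(A)$ denotes the class of languages recognized by machines of type $A$; the union ranges over $k\ge1$. $\mathsf{TISP}(n^3,n)$ is the class of languages decidable by a deterministic Turing machine that simultaneously uses time $O(n^3)$ and space $O(n)$ on inputs of length $n$. A real-time deterministic vector automaton of dimension $k$ ($\mathrm{rtDVA}(k)$) is a 6-tuple $(Q,\Sigma,\delta,q_0,Q_a,v)$ with finite state set $Q$, initial state $q_0$, accept states $Q_a$, initial row vector $v\in\mathbb{Q}^k$ (freely chosen), and $\delta:Q\times(\Sigma\cup\{\cent,\$\})\times\{=,\neq\}\to Q\times S$, $S$ the set of $k\times k$ rational matrices. The input $w$ is read as $\cent w\$$ left to right, one symbol per step; in state $q$ reading $\sigma$, with $\omega$ equal to "$=$" iff the first vector entry equals $1$, if $\delta(q,\sigma,\omega)=(q',M)$ the machine goes to $q'$ and multiplies its row vector on the right by $M$. Acceptance: after processing $\$$, the state is in $Q_a$ and the first vector entry equals $1$. *)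

theory Defs
  imports Complex_Main
begin

datatype 'a esym = Cent | Dollar | Sym 'a

text \<open>Vectors of dimension k are functions nat => rat (only indices < k matter),
  k x k matrices are functions nat => nat => rat (only indices < k matter).
  Index 0 is the first entry.\<close>
definition vmult :: "nat \<Rightarrow> (nat \<Rightarrow> rat) \<Rightarrow> (nat \<Rightarrow> nat \<Rightarrow> rat) \<Rightarrow> (nat \<Rightarrow> rat)" where
  "vmult k v M = (\<lambda>j. \<Sum>i<k. v i * M i j)"

record 'a dva =
  dva_states :: "nat set"
  dva_delta  :: "nat \<Rightarrow> 'a esym \<Rightarrow> bool \<Rightarrow> nat \<times> (nat \<Rightarrow> nat \<Rightarrow> rat)"
  dva_init   :: nat
  dva_acc    :: "nat set"
  dva_vec    :: "nat \<Rightarrow> rat"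

text \<open>Well-formedness of an rtDVA(k). The boolean argument of the transition
  function is True iff the first vector entry equals 1 (i.e. omega is "=").\<close>
definition rtDVA :: "nat \<Rightarrow> 'a dva \<Rightarrow> bool" where
  "rtDVA k A \<longleftrightarrow> k \<ge> 1 \<and> finite (dva_states A) \<and> dva_init A \<in> dva_states A
     \<and> dva_acc A \<subseteq> dva_states A
     \<and> (\<forall>q\<in>dva_states A. \<forall>\<sigma> b. fst (dva_delta A q \<sigma> b) \<in> dva_states A)"

definition dva_step :: "nat \<Rightarrow> 'a dva \<Rightarrow> nat \<times> (nat \<Rightarrow> rat) \<Rightarrow> 'a esym \<Rightarrow> nat \<times> (nat \<Rightarrow> rat)" where
  "dva_step k A c \<sigma> =
     (case dva_delta A (fst c) \<sigma> (snd c 0 = 1) of (q', M) \<Rightarrow> (q', vmult k (snd c) M))"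

definition dva_run :: "nat \<Rightarrow> 'a dva \<Rightarrow> 'a list \<Rightarrow> nat \<times> (nat \<Rightarrow> rat)" where
  "dva_run k A w = foldl (dva_step k A) (dva_init A, dva_vec A) ([Cent] @ map Sym w @ [Dollar])"

definition dva_lang :: "nat \<Rightarrow> 'a dva \<Rightarrow> 'a list set" where
  "dva_lang k A = {w. fst (dva_run k A w) \<in> dva_acc A \<and> snd (dva_run k A w) 0 = 1}"

definition rtDVA_langs :: "nat \<Rightarrow> 'a list set set" where
  "rtDVA_langs k = {L. \<exists>A. rtDVA k A \<and> dva_lang k A = L}"

datatype 'a tsym = Blank | Inp 'a | Wk nat

record 'a tm =
  tm_k     :: nat
  tm_Q     :: "nat set"
  tm_Gamma :: "'a tsym set"
  tm_q0    :: nat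
  tm_acc   :: nat
  tm_rej   :: nat
  tm_delta :: "nat \<Rightarrow> 'a tsym list \<Rightarrow> nat \<times> 'a tsym list \<times> int list"

definition tm_wf :: "'a tm \<Rightarrow> bool" where
  "tm_wf M \<longleftrightarrow> tm_k M \<ge> 1 \<and> finite (tm_Q M) \<and> finite (tm_Gamma M)
     \<and> Blank \<in> tm_Gamma M \<and> range Inp \<subseteq> tm_Gamma M
     \<and> tm_q0 M \<in> tm_Q M \<and> tm_acc M \<in> tm_Q M \<and> tm_rej M \<in> tm_Q M \<and> tm_acc M \<noteq> tm_rej M
     \<and> (\<forall>q \<in> tm_Q M - {tm_acc M, tm_rej M}. \<forall>gs.
          length gs = tm_k M \<and> set gs \<subseteq> tm_Gamma M \<longrightarrow>
          (case tm_delta M q gs of (q', ws, ds) \<Rightarrow>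
             q' \<in> tm_Q M \<and> length ws = tm_k M \<and> set ws \<subseteq> tm_Gamma M
             \<and> length ds = tm_k M \<and> set ds \<subseteq> {-1, 0, 1}))"

type_synonym 'a tm_config = "nat \<times> (int \<Rightarrow> 'a tsym) list \<times> int list"

definition tm_step :: "'a tm \<Rightarrow> 'a tm_config \<Rightarrow> 'a tm_config" where
  "tm_step M c = (case c of (q, ts, hs) \<Rightarrow>
     if q = tm_acc M \<or> q = tm_rej M then c
     else (case tm_delta M q [(ts ! i) (hs ! i). i \<leftarrow> [0..<tm_k M]] of (q', ws, ds) \<Rightarrow>
       (q', [(ts ! i)(hs ! i := ws ! i). i \<leftarrow> [0..<tm_k M]],
            [hs ! i + ds ! i. i \<leftarrow> [0..<tm_k M]])))"

definition tm_init :: "'a tm \<Rightarrow> 'a list \<Rightarrow> 'a tm_config" where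
  "tm_init M w = (tm_q0 M,
     (\<lambda>p. if 0 \<le> p \<and> p < int (length w) then Inp (w ! nat p) else Blank)
       # replicate (tm_k M - 1) (\<lambda>_. Blank),
     replicate (tm_k M) 0)"

definition tm_cfg :: "'a tm \<Rightarrow> 'a list \<Rightarrow> nat \<Rightarrow> 'a tm_config" where
  "tm_cfg M w t = (tm_step M ^^ t) (tm_init M w)"

definition tm_decides_within :: "'a tm \<Rightarrow> 'a list set \<Rightarrow> (nat \<Rightarrow> nat) \<Rightarrow> (nat \<Rightarrow> nat) \<Rightarrow> bool" where
  "tm_decides_within M L T S \<longleftrightarrow> (\<forall>w. \<exists>t. t \<le> T (length w)
     \<and> fst (tm_cfg M w t) \<in> {tm_acc M, tm_rej M}
     \<and> (fst (tm_cfg M w t) = tm_acc M \<longleftrightarrow> w \<in> L)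
     \<and> card {(i, snd (snd (tm_cfg M w s)) ! i) | s i. s \<le> t \<and> i < tm_k M} \<le> S (length w))"

definition TISP :: "(nat \<Rightarrow> nat) \<Rightarrow> (nat \<Rightarrow> nat) \<Rightarrow> 'a list set set" where
  "TISP T S = {L. \<exists>M c. tm_wf M \<and> tm_decides_within M L (\<lambda>n. c * T n + c) (\<lambda>n. c * S n + c)}"

end

theory Submission
  imports Defs "HOL-Library.Countable"
begin



fun val :: "nat \<Rightarrow> nat list list \<Rightarrow> nat \<Rightarrow> nat" where
  "val B [] i = 0"
| "val B (ds # r) i = ds ! i + B * val B r i"

definition newd :: "nat \<Rightarrow> (nat \<Rightarrow> nat \<Rightarrow> nat) \<Rightarrow> nat list \<Rightarrow> nat list \<Rightarrow> nat list" where
  "newd m G ds cs = map (\<lambda>j. (\<Sum>i<m. ds ! i * G i j) + cs ! j) [0..<m]"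

definition comb :: "nat \<Rightarrow> nat list \<Rightarrow> int" where
  "comb k nd = int (nd ! 0) + int (nd ! (2*k+1)) - int (nd ! (2*k)) - int (nd ! 1)"

definition cstep :: "nat \<Rightarrow> nat \<Rightarrow> nat \<Rightarrow> (nat \<Rightarrow> nat \<Rightarrow> nat) \<Rightarrow> nat list \<times> int \<times> bool \<Rightarrow> nat list
   \<Rightarrow> nat list \<times> (nat list \<times> int \<times> bool)" where
  "cstep m B k G st ds = (case st of (cs, e, fl) \<Rightarrow>
     (let s = newd m G ds cs; nd = map (\<lambda>x. x mod B) s; z = comb k nd + e in
      (nd, (map (\<lambda>x. x div B) s, z div int B, fl \<and> z mod int B = 0))))"

fun swp :: "nat \<Rightarrow> nat \<Rightarrow> nat \<Rightarrow> (nat \<Rightarrow> nat \<Rightarrow> nat) \<Rightarrow> nat list \<times> int \<times> bool \<Rightarrow> nat list list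
   \<Rightarrow> nat list list \<times> (nat list \<times> int \<times> bool)" where
  "swp m B k G st [] = ([], st)"
| "swp m B k G st (ds # dss) = (let (nd, st') = cstep m B k G st ds; (r, st'') = swp m B k G st' dss in (nd # r, st''))"

lemma val_append: "val B (xs @ ys) i = val B xs i + B ^ length xs * val B ys i"
  by (induction xs) (auto simp: algebra_simps)

lemma swp_len: "length (fst (swp m B k G st dss)) = length dss"
  by (induction dss arbitrary: st) (auto simp: split_beta)

lemma swp_arith:
  assumes "length cs = m" "j < m" "0 < B"
  shows "(\<Sum>i<m. val B dss i * G i j) + cs ! j
     = val B (fst (swp m B k G (cs, e, fl) dss)) j + B ^ length dss * (fst (snd (swp m B k G (cs, e, fl) dss))) ! j
       \<and> length (fst (snd (swp m B k G (cs, e, fl) dss))) = m"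
  using assms(1)
proof (induction dss arbitrary: cs e fl)
  case Nil
  then show ?case by simp
next
  case (Cons ds dss)
  define s where "s = newd m G ds cs"
  define nd where "nd = map (\<lambda>x. x mod B) s"
  define cs' where "cs' = map (\<lambda>x. x div B) s"
  define z where "z = comb k nd + e"
  have cst: "cstep m B k G (cs, e, fl) ds = (nd, (cs', z div int B, fl \<and> z mod int B = 0))"
    by (simp add: cstep_def s_def nd_def cs'_def z_def Let_def)
  obtain r st'' where sw: "swp m B k G (cs', z div int B, fl \<and> z mod int B = 0) dss = (r, st'')"
    by (metis prod.exhaust)
  have lcs': "length cs' = m" by (simp add: cs'_def s_def newd_def)
  from Cons.IH[OF lcs', of "z div int B" "fl \<and> z mod int B = 0"] sw
  have IH: "(\<Sum>i<m. val B dss i * G i j) + cs' ! j = val B r j + B ^ length dss * fst st'' ! j"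
     "length (fst st'') = m" by auto
  have sj: "s ! j = (\<Sum>i<m. ds ! i * G i j) + cs ! j" using assms(2) by (simp add: s_def newd_def)
  have "s ! j = nd ! j + B * cs' ! j" using assms(2) by (simp add: nd_def cs'_def s_def newd_def)
  have "(\<Sum>i<m. val B (ds # dss) i * G i j) = (\<Sum>i<m. ds ! i * G i j) + B * (\<Sum>i<m. val B dss i * G i j)"
    by (simp add: distrib_right sum.distrib sum_distrib_left mult.assoc)
  then have "(\<Sum>i<m. val B (ds # dss) i * G i j) + cs ! j
      = (\<Sum>i<m. ds ! i * G i j) + cs ! j + B * (\<Sum>i<m. val B dss i * G i j)"
    by simp
  also have "\<dots> = nd ! j + B * (cs' ! j + (\<Sum>i<m. val B dss i * G i j))"
    using sj \<open>s ! j = nd ! j + B * cs' ! j\<close> by (simp add: algebra_simps)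
  also have "\<dots> = nd ! j + B * (val B r j + B ^ length dss * fst st'' ! j)"
    using IH(1) by (simp add: add.commute)
  finally show ?case using cst sw IH(2) by (simp add: algebra_simps)
qed

definition Zv :: "nat \<Rightarrow> nat \<Rightarrow> nat list list \<Rightarrow> int" where
  "Zv B k r = int (val B r 0) + int (val B r (2*k+1)) - int (val B r (2*k)) - int (val B r 1)"

lemma swp_cmp:
  assumes "0 < B"
  shows "(fst (snd (snd (swp m B k G (cs, e, fl) dss))) = 0 \<and> snd (snd (snd (swp m B k G (cs, e, fl) dss))))
     \<longleftrightarrow> (fl \<and> Zv B k (fst (swp m B k G (cs, e, fl) dss)) + e = 0)"
proof (induction dss arbitrary: cs e fl)
  case Nil
  then show ?case by (auto simp: Zv_def)
next
  case (Cons ds dss)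
  define s where "s = newd m G ds cs"
  define nd where "nd = map (\<lambda>x. x mod B) s"
  define cs' where "cs' = map (\<lambda>x. x div B) s"
  define z where "z = comb k nd + e"
  have cst: "cstep m B k G (cs, e, fl) ds = (nd, (cs', z div int B, fl \<and> z mod int B = 0))"
    by (simp add: cstep_def s_def nd_def cs'_def z_def Let_def)
  obtain r e2 fl2 cs2 where sw: "swp m B k G (cs', z div int B, fl \<and> z mod int B = 0) dss = (r, cs2, e2, fl2)"
    by (metis prod.exhaust)
  from Cons.IH[of cs' "z div int B" "fl \<and> z mod int B = 0"] sw
  have IH: "(e2 = 0 \<and> fl2) = ((fl \<and> z mod int B = 0) \<and> Zv B k r + z div int B = 0)" by simp
  have Zc: "Zv B k (nd # r) = comb k nd + int B * Zv B k r"
    by (simp add: Zv_def comb_def algebra_simps)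
  have zdm: "z = z mod int B + int B * (z div int B)" by simp
  have key: "(z mod int B = 0 \<and> Zv B k r + z div int B = 0) \<longleftrightarrow> z + int B * Zv B k r = 0"
  proof
    assume "z mod int B = 0 \<and> Zv B k r + z div int B = 0"
    then have "z div int B = - Zv B k r" "z mod int B = 0" by auto
    then have "z = int B * (- Zv B k r)" using zdm by simp
    then show "z + int B * Zv B k r = 0" by simp
  next
    assume h: "z + int B * Zv B k r = 0"
    then have "z = int B * (- Zv B k r)" by simp
    moreover have "int B * (- Zv B k r) div int B = - Zv B k r"
      by (rule nonzero_mult_div_cancel_left) (use assms in simp)
    ultimately show "z mod int B = 0 \<and> Zv B k r + z div int B = 0" by simp
  qed
  have "fst (snd (snd (swp m B k G (cs, e, fl) (ds # dss)))) = e2"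
       "snd (snd (snd (swp m B k G (cs, e, fl) (ds # dss)))) = fl2"
       "fst (swp m B k G (cs, e, fl) (ds # dss)) = nd # r"
    using cst sw by simp_all
  moreover have "Zv B k (nd # r) + e = z + int B * Zv B k r" using Zc by (simp add: z_def)
  ultimately show ?case using IH key by auto
qed

lemma swp_append: "swp m B k G st (dss @ [ds]) =
  (let (r, st') = swp m B k G st dss; (nd, st'') = cstep m B k G st' ds in (r @ [nd], st''))"
  by (induction dss arbitrary: st) (auto simp: split_beta)

lemma newd_bound:
  fixes B S c :: nat and G :: "nat \<Rightarrow> nat \<Rightarrow> nat"
  assumes "length ds = m" "\<forall>d\<in>set ds. d < B" "\<forall>j<m. (\<Sum>i<m. G i j) \<le> S" "j < m" "c \<le> S" "0 < B"
  shows "(\<Sum>i<m. ds ! i * G i j) + c \<le> B * S"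
proof -
  have "(\<Sum>i<m. ds ! i * G i j) \<le> (\<Sum>i<m. (B - 1) * G i j)"
  proof (intro sum_mono mult_right_mono)
    fix i assume "i \<in> {..<m}"
    then have "ds ! i < B" using assms(1,2) by auto
    then show "ds ! i \<le> B - 1" by simp
  qed simp
  also have "\<dots> = (B - 1) * (\<Sum>i<m. G i j)" by (simp add: sum_distrib_left)
  also have "\<dots> \<le> (B - 1) * S" using assms(3,4) by simp
  finally have "(\<Sum>i<m. ds ! i * G i j) + c \<le> (B - 1) * S + S" using assms(5) by simp
  also have "\<dots> = B * S" using assms(6) by (cases B) auto
  finally show ?thesis .
qed

definition cellok :: "nat \<Rightarrow> nat \<Rightarrow> nat list \<Rightarrow> bool" where
  "cellok m B ds \<longleftrightarrow> length ds = m \<and> (\<forall>d\<in>set ds. d < B)"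

lemma cstep_bounds:
  assumes "cellok m B ds" "\<forall>j<m. (\<Sum>i<m. G i j) \<le> S" "length cs = m" "\<forall>c\<in>set cs. c \<le> S" "0 < B"
    "cstep m B k G (cs, e, fl) ds = (nd, cs', e', fl')"
  shows "cellok m B nd \<and> length cs' = m \<and> (\<forall>c\<in>set cs'. c \<le> S)"
proof -
  have nd: "nd = map (\<lambda>x. x mod B) (newd m G ds cs)" and cs': "cs' = map (\<lambda>x. x div B) (newd m G ds cs)"
    using assms(6) by (auto simp: cstep_def Let_def)
  have "\<forall>c\<in>set cs'. c \<le> S"
  proof
    fix c assume "c \<in> set cs'"
    then obtain j where j: "j < m" "c = ((\<Sum>i<m. ds ! i * G i j) + cs ! j) div B"
      by (auto simp: cs' newd_def)
    have "(\<Sum>i<m. ds ! i * G i j) + cs ! j \<le> B * S"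
      using newd_bound[of ds m B G S j "cs ! j"] assms j(1) by (auto simp: cellok_def)
    then have "((\<Sum>i<m. ds ! i * G i j) + cs ! j) div B \<le> (B * S) div B" by (rule div_le_mono)
    then show "c \<le> S" using j assms(5) by simp
  qed
  then show ?thesis using assms(5) by (auto simp: nd cs' cellok_def newd_def)
qed

lemma swp_bounds:
  assumes "\<forall>ds\<in>set dss. cellok m B ds" "\<forall>j<m. (\<Sum>i<m. G i j) \<le> S" "length cs = m" "\<forall>c\<in>set cs. c \<le> S" "0 < B"
  shows "(\<forall>nd\<in>set (fst (swp m B k G (cs, e, fl) dss)). cellok m B nd) \<and> length (fst (snd (swp m B k G (cs, e, fl) dss))) = m
    \<and> (\<forall>c\<in>set (fst (snd (swp m B k G (cs, e, fl) dss))). c \<le> S)"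
  using assms(1,3,4)
proof (induction dss arbitrary: cs e fl)
  case Nil
  then show ?case by simp
next
  case (Cons ds dss)
  obtain nd cs' e' fl' where cst: "cstep m B k G (cs, e, fl) ds = (nd, cs', e', fl')" by (metis prod.exhaust)
  have b: "cellok m B nd \<and> length cs' = m \<and> (\<forall>c\<in>set cs'. c \<le> S)"
    using cstep_bounds[OF _ assms(2) _ _ assms(5) cst] Cons.prems by auto
  then show ?case using Cons.IH[of cs' e' fl'] Cons.prems cst by (auto simp: split_beta)
qed




instance esym :: (countable) countable by countable_datatype

lemma UNIV_esym: "(UNIV :: 'a esym set) = insert Cent (insert Dollar (range Sym))"
  by (auto intro: esym.exhaust)

instance esym :: (finite) finite
  by standard (simp add: UNIV_esym)

datatype 'a st = Init | Sw nat "'a esym" bool "nat list" int bool | Back nat bool | Start nat bool | Acc | Rej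

instance st :: (countable) countable by countable_datatype

locale sim =
  fixes k :: nat and A :: "('a::finite) dva"
  assumes wfA: "rtDVA k A"
begin

abbreviation "Qs \<equiv> dva_states A"

definition "m = 2 * (k + 1)"

definition Xr :: "rat set" where
  "Xr = (\<lambda>(q, \<sigma>, b, i, j). snd (dva_delta A q \<sigma> b) i j) ` (Qs \<times> UNIV \<times> UNIV \<times> {..<k} \<times> {..<k})
      \<union> dva_vec A ` {..<k}"

lemma finQs: "finite Qs" using wfA by (simp add: rtDVA_def)

lemma finite_Xr: "finite Xr"
  unfolding Xr_def using finQs by auto

definition D :: int where "D = (\<Prod>x\<in>Xr. snd (quotient_of x))"

lemma D_pos: "D > 0"
  unfolding D_def by (rule prod_pos) (metis prod.collapse quotient_of_denom_pos)

lemma D_int: assumes "x \<in> Xr" shows "of_int D * x \<in> \<int>"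
proof -
  obtain n d where nd: "quotient_of x = (n, d)" by (metis prod.exhaust)
  have d: "d > 0" using nd quotient_of_denom_pos by blast
  have x: "x = of_int n / of_int d" using nd quotient_of_div by blast
  have "D = d * (\<Prod>y\<in>Xr - {x}. snd (quotient_of y))"
    unfolding D_def using prod.remove[OF finite_Xr assms, of "\<lambda>y. snd (quotient_of y)"] nd by simp
  then have "of_int D * x = of_int (\<Prod>y\<in>Xr - {x}. snd (quotient_of y)) * of_int n"
    using d x by simp
  then show ?thesis by (metis Ints_mult Ints_of_int)
qed

definition nz :: "rat \<Rightarrow> int" where "nz x = \<lfloor>of_int D * x\<rfloor>"

lemma nz_eq: assumes "x \<in> Xr" shows "of_int (nz x) = of_int D * x"
proof -
  from D_int[OF assms] obtain z where "of_int D * x = of_int z" by (auto elim: Ints_cases)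
  then show ?thesis by (simp add: nz_def)
qed

definition E :: "nat \<Rightarrow> 'a esym \<Rightarrow> bool \<Rightarrow> nat \<Rightarrow> nat \<Rightarrow> int" where
  "E q \<sigma> b i j = (if i < k \<and> j < k then nz (snd (dva_delta A q \<sigma> b) i j)
      else if i = k \<and> j = k then D else 0)"

definition G :: "nat \<Rightarrow> 'a esym \<Rightarrow> bool \<Rightarrow> nat \<Rightarrow> nat \<Rightarrow> nat" where
  "G q \<sigma> b i j = (if even i = even j then nat (E q \<sigma> b (i div 2) (j div 2)) else nat (- E q \<sigma> b (i div 2) (j div 2)))"

definition u0 :: "nat \<Rightarrow> int" where
  "u0 i = (if i < k then nz (dva_vec A i) else if i = k then D else 0)"

definition x0 :: "nat \<Rightarrow> nat" where
  "x0 i = (if even i then nat (u0 (i div 2)) else nat (- u0 (i div 2)))"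

definition "cell0 = map x0 [0..<m]"

definition S :: nat where
  "S = (\<Sum>(q, \<sigma>, b) \<in> Qs \<times> UNIV \<times> UNIV. \<Sum>j<m. \<Sum>i<m. G q \<sigma> b i j)"

definition B :: nat where "B = S + (\<Sum>i<m. x0 i) + 2"

definition "zeros = replicate m (0::nat)"

definition dec :: "'a tsym \<Rightarrow> nat list" where
  "dec g = (case g of Wk n \<Rightarrow> from_nat n | _ \<Rightarrow> zeros)"

definition raw :: "'a st \<Rightarrow> 'a tsym \<Rightarrow> 'a tsym \<Rightarrow> 'a st \<times> 'a tsym \<times> int \<times> int" where
  "raw s g0 g1 = (case s of
     Init \<Rightarrow> (Sw (dva_init A) Cent (dva_vec A 0 = 1) zeros 0 True, Wk (to_nat cell0), 0, 0)
   | Sw q \<sigma> b cs e fl \<Rightarrow> (case cstep m B k (G q \<sigma> b) (cs, e, fl) (dec g1) of (nd, cs', e', fl') \<Rightarrow>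
       if g1 = Blank then
         ((if \<sigma> = Dollar then (if fst (dva_delta A q \<sigma> b) \<in> dva_acc A \<and> fl' \<and> e' = 0 then Acc else Rej)
           else Back (fst (dva_delta A q \<sigma> b)) (fl' \<and> e' = 0)), Wk (to_nat nd), 0, -1)
       else (Sw q \<sigma> b cs' e' fl', Wk (to_nat nd), 0, 1))
   | Back q fl \<Rightarrow> (if g1 = Blank then (Start q fl, g1, 0, 1) else (Back q fl, g1, 0, -1))
   | Start q fl \<Rightarrow> (case g0 of Inp a \<Rightarrow> (Sw q (Sym a) fl zeros 0 True, g1, 1, 0)
                              | _ \<Rightarrow> (Sw q Dollar fl zeros 0 True, g1, 0, 0))
   | _ \<Rightarrow> (Rej, g1, 0, 0))"

definition Cells :: "nat list set" where "Cells = {ds. cellok m B ds}"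

definition Gam :: "'a tsym set" where
  "Gam = {Blank} \<union> range Inp \<union> (\<lambda>ds. Wk (to_nat ds)) ` Cells"

definition Cs :: "nat list set" where "Cs = {cs. length cs = m \<and> (\<forall>c\<in>set cs. c \<le> S)}"

definition Fs :: "'a st set" where
  "Fs = {Init, Acc, Rej} \<union> (\<lambda>(q, fl). Start q fl) ` (Qs \<times> UNIV) \<union> (\<lambda>(q, fl). Back q fl) ` (Qs \<times> UNIV)
     \<union> (\<lambda>(q, \<sigma>, b, cs, e, fl). Sw q \<sigma> b cs e fl) ` (Qs \<times> UNIV \<times> UNIV \<times> Cs \<times> {-2..2} \<times> UNIV)"

definition TM :: "'a tm" where
  "TM = \<lparr>tm_k = 2, tm_Q = to_nat ` Fs, tm_Gamma = Gam, tm_q0 = to_nat (Init :: 'a st),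
     tm_acc = to_nat (Acc :: 'a st), tm_rej = to_nat (Rej :: 'a st),
     tm_delta = (\<lambda>q gs. case raw (from_nat q) (gs ! 0) (gs ! 1) of (s', w1, d0, d1) \<Rightarrow> (to_nat s', [gs ! 0, w1], [d0, d1]))\<rparr>"

lemma finU: "finite (Qs \<times> (UNIV :: 'a esym set) \<times> (UNIV :: bool set))"
  using finQs by simp

lemma colsum: assumes "q \<in> Qs" "j < m" shows "(\<Sum>i<m. G q \<sigma> b i j) \<le> S"
proof -
  have "(\<Sum>i<m. G q \<sigma> b i j) \<le> (\<Sum>j<m. \<Sum>i<m. G q \<sigma> b i j)"
    using assms(2) by (intro member_le_sum) auto
  also have "\<dots> \<le> S" unfolding S_def
    using member_le_sum[OF _ _ finU, of "(q, \<sigma>, b)" "\<lambda>(q, \<sigma>, b). \<Sum>j<m. \<Sum>i<m. G q \<sigma> b i j"] assms(1)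
    by auto
  finally show ?thesis .
qed

lemma B_gt: "S < B" "0 < B" "2 \<le> B" by (auto simp: B_def)

lemma x0_lt: assumes "i < m" shows "x0 i < B"
proof -
  have "x0 i \<le> (\<Sum>i<m. x0 i)" using assms by (intro member_le_sum) auto
  then show ?thesis by (simp add: B_def)
qed

lemma cell0_ok: "cellok m B cell0" by (auto simp: cellok_def cell0_def x0_lt)
lemma zeros_ok: "cellok m B zeros" using B_gt by (auto simp: cellok_def zeros_def)
lemma zeros_Cs: "zeros \<in> Cs" by (auto simp: Cs_def zeros_def)

lemma finite_Cells: "finite Cells"
proof -
  have "Cells \<subseteq> {xs. set xs \<subseteq> {..<B} \<and> length xs = m}" by (auto simp: Cells_def cellok_def)
  moreover have "finite {xs. set xs \<subseteq> {..<B} \<and> length xs = m}" by (rule finite_lists_length_eq) simp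
  ultimately show ?thesis by (rule finite_subset)
qed

lemma finite_Cs: "finite Cs"
proof -
  have "Cs \<subseteq> {xs. set xs \<subseteq> {..S} \<and> length xs = m}" by (auto simp: Cs_def)
  moreover have "finite {xs. set xs \<subseteq> {..S} \<and> length xs = m}" by (rule finite_lists_length_eq) simp
  ultimately show ?thesis by (rule finite_subset)
qed

lemma finite_Gam: "finite Gam" unfolding Gam_def using finite_Cells by auto

lemma finite_Fs: "finite Fs" unfolding Fs_def using finQs finite_Cs by auto

lemma dec_ok: assumes "g \<in> Gam" shows "cellok m B (dec g)"
  using assms zeros_ok by (auto simp: Gam_def dec_def Cells_def)

lemma dec_Wk[simp]: "dec (Wk (to_nat ds)) = ds" by (simp add: dec_def)
lemma dec_Blank[simp]: "dec Blank = zeros" by (simp add: dec_def)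

lemma comb_bound: assumes "cellok m B nd" shows "\<bar>comb k nd\<bar> \<le> 2 * (int B - 1)"
proof -
  have l: "i < m \<Longrightarrow> int (nd ! i) \<le> int B - 1" for i
    using assms by (auto simp: cellok_def)
  have "2 * k + 1 < m" "2 * k < m" "0 < m" "1 < m" by (auto simp: m_def)
  then show ?thesis using l[of 0] l[of "2*k+1"] l[of "2*k"] l[of 1] unfolding comb_def by auto
qed

lemma cstep_ok:
  assumes "q \<in> Qs" "cellok m B ds" "cs \<in> Cs" "e \<in> {-2..2}"
    "cstep m B k (G q \<sigma> b) (cs, e, fl) ds = (nd, cs', e', fl')"
  shows "cellok m B nd \<and> cs' \<in> Cs \<and> e' \<in> {-2..2}"
proof -
  have bnd: "cellok m B nd \<and> length cs' = m \<and> (\<forall>c\<in>set cs'. c \<le> S)"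
    using cstep_bounds[OF assms(2) _ _ _ _ assms(5), of S] colsum[OF assms(1)] assms(3) B_gt
    by (auto simp: Cs_def)
  have e': "e' = (comb k nd + e) div int B" using assms(5) by (auto simp: cstep_def Let_def)
  have cb: "\<bar>comb k nd\<bar> \<le> 2 * (int B - 1)" using comb_bound bnd by blast
  have Bp: "int B > 0" using B_gt by simp
  have "comb k nd + e \<ge> -2 * int B" using cb assms(4) by auto
  then have "(-2 * int B) div int B \<le> (comb k nd + e) div int B" by (rule zdiv_mono1) (use Bp in auto)
  moreover have "(-2 * int B) div int B = -2" by (rule nonzero_mult_div_cancel_right) (use Bp in simp)
  ultimately have lo: "-2 \<le> e'" using e' by simp
  have "comb k nd + e \<le> 2 * int B" using cb assms(4) by auto
  then have "(comb k nd + e) div int B \<le> (2 * int B) div int B" by (rule zdiv_mono1) (use Bp in auto)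
  moreover have "(2 * int B) div int B = 2" by (rule nonzero_mult_div_cancel_right) (use Bp in simp)
  ultimately have hi: "e' \<le> 2" using e' by simp
  show ?thesis using bnd lo hi by (auto simp: Cs_def)
qed

lemma raw_ok:
  assumes "s \<in> Fs" "g0 \<in> Gam" "g1 \<in> Gam" "raw s g0 g1 = (s', w1, d0, d1)"
  shows "s' \<in> Fs \<and> w1 \<in> Gam \<and> d0 \<in> {-1, 0, 1} \<and> d1 \<in> {-1, 0, 1}"
proof -
  have init: "dva_init A \<in> Qs" using wfA by (simp add: rtDVA_def)
  have dl: "q \<in> Qs \<Longrightarrow> fst (dva_delta A q \<sigma> b) \<in> Qs" for q \<sigma> b using wfA by (simp add: rtDVA_def)
  have swF: "q \<in> Qs \<Longrightarrow> cs \<in> Cs \<Longrightarrow> e \<in> {-2..2} \<Longrightarrow> Sw q \<sigma> b cs e fl \<in> Fs" for q \<sigma> b cs e fl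
    unfolding Fs_def by (rule UnI2, rule image_eqI[where x="(q, \<sigma>, b, cs, e, fl)"]) auto
  consider "s = Init" | "s = Acc" | "s = Rej" | q fl where "q \<in> Qs" "s = Start q fl"
    | q fl where "q \<in> Qs" "s = Back q fl"
    | q \<sigma> b cs e fl where "q \<in> Qs" "cs \<in> Cs" "e \<in> {-2..2}" "s = Sw q \<sigma> b cs e fl"
    using assms(1) unfolding Fs_def by auto
  then show ?thesis
  proof cases
    case 1
    then show ?thesis using assms(4) init zeros_Cs cell0_ok swF by (auto simp: raw_def Gam_def Cells_def)
  next
    case 2
    then show ?thesis using assms by (auto simp: raw_def Fs_def)
  next
    case 3
    then show ?thesis using assms by (auto simp: raw_def Fs_def)
  next
    case (4 q fl)
    then show ?thesis using assms zeros_Cs swF by (auto simp: raw_def split: tsym.splits)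
  next
    case (5 q fl)
    then show ?thesis using assms by (auto simp: raw_def Fs_def split: if_splits)
  next
    case (6 q \<sigma> b cs e fl)
    obtain nd cs' e' fl' where cst: "cstep m B k (G q \<sigma> b) (cs, e, fl) (dec g1) = (nd, cs', e', fl')"
      by (metis prod.exhaust)
    have ok: "cellok m B nd \<and> cs' \<in> Cs \<and> e' \<in> {-2..2}"
      using cstep_ok[OF 6(1) dec_ok[OF assms(3)] 6(2,3) cst] .
    then have "Wk (to_nat nd) \<in> Gam" by (auto simp: Gam_def Cells_def)
    have bF: "Back (fst (dva_delta A q \<sigma> b)) fl2 \<in> Fs" for fl2 using dl[OF 6(1)] by (auto simp: Fs_def)
    have aF: "Acc \<in> Fs" "Rej \<in> Fs" by (auto simp: Fs_def)
    have sF: "Sw q \<sigma> b cs' e' fl' \<in> Fs" using swF 6 ok by auto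
    show ?thesis using assms(4) 6 cst ok bF aF sF \<open>Wk (to_nat nd) \<in> Gam\<close> by (auto simp: raw_def split: if_splits)
  qed
qed

lemma Acc_Rej_Fs: "Init \<in> Fs" "Acc \<in> Fs" "Rej \<in> Fs" by (auto simp: Fs_def)

lemma TM_wf: "tm_wf TM"
proof -
  have "\<forall>q \<in> tm_Q TM - {tm_acc TM, tm_rej TM}. \<forall>gs.
          length gs = tm_k TM \<and> set gs \<subseteq> tm_Gamma TM \<longrightarrow>
          (case tm_delta TM q gs of (q', ws, ds) \<Rightarrow>
             q' \<in> tm_Q TM \<and> length ws = tm_k TM \<and> set ws \<subseteq> tm_Gamma TM
             \<and> length ds = tm_k TM \<and> set ds \<subseteq> {-1, 0, 1})"
  proof (intro ballI allI impI)
    fix q gs assume q: "q \<in> tm_Q TM - {tm_acc TM, tm_rej TM}" and gs: "length gs = tm_k TM \<and> set gs \<subseteq> tm_Gamma TM"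
    from q obtain s where s: "s \<in> Fs" "q = to_nat s" by (auto simp: TM_def)
    have g: "gs ! 0 \<in> Gam" "gs ! 1 \<in> Gam" using gs by (auto simp: TM_def)
    obtain s' w1 d0 d1 where r: "raw s (gs ! 0) (gs ! 1) = (s', w1, d0, d1)" by (metis prod.exhaust)
    have "s' \<in> Fs \<and> w1 \<in> Gam \<and> d0 \<in> {-1, 0, 1} \<and> d1 \<in> {-1, 0, 1}" using raw_ok[OF s(1) g r] .
    then show "case tm_delta TM q gs of (q', ws, ds) \<Rightarrow>
             q' \<in> tm_Q TM \<and> length ws = tm_k TM \<and> set ws \<subseteq> tm_Gamma TM
             \<and> length ds = tm_k TM \<and> set ds \<subseteq> {-1, 0, 1}"
      using r s g by (auto simp: TM_def)
  qed
  moreover have "range Inp \<subseteq> Gam" "Blank \<in> Gam" by (auto simp: Gam_def)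
  ultimately show ?thesis using finite_Fs finite_Gam Acc_Rej_Fs
    by (auto simp: tm_wf_def TM_def)
qed

end



definition tape1 :: "nat list list \<Rightarrow> int \<Rightarrow> 'a tsym" where
  "tape1 cells = (\<lambda>p. if 0 \<le> p \<and> p < int (length cells) then Wk (to_nat (cells ! nat p)) else Blank)"

lemma tape1_upd: "(tape1 (xs @ y # zs))(int (length xs) := Wk (to_nat y')) = (tape1 (xs @ y' # zs) :: int \<Rightarrow> 'a tsym)"
  by (rule ext) (auto simp: tape1_def nth_append nat_less_iff)

lemma tape1_snoc: "(tape1 xs)(int (length xs) := Wk (to_nat y)) = (tape1 (xs @ [y]) :: int \<Rightarrow> 'a tsym)"
  by (rule ext) (auto simp: tape1_def nth_append nat_less_iff)

lemma tape1_in: "0 \<le> p \<Longrightarrow> p < int (length xs) \<Longrightarrow> tape1 xs p = Wk (to_nat (xs ! nat p))"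
  by (simp add: tape1_def)

lemma tape1_out: "\<not> (0 \<le> p \<and> p < int (length xs)) \<Longrightarrow> tape1 xs p = Blank"
  by (simp add: tape1_def)

lemma tape1_neg[simp]: "tape1 cells (-1) = Blank" by (simp add: tape1_def)

context sim begin

lemma step2:
  assumes "s \<noteq> Acc" "s \<noteq> Rej"
  shows "tm_step TM (to_nat s, [T0, T1], [h0, h1]) =
    (case raw s (T0 h0) (T1 h1) of (s', w1, d0, d1) \<Rightarrow> (to_nat s', [T0, T1(h1 := w1)], [h0 + d0, h1 + d1]))"
proof -
  have u: "[0..<2] = [0, 1::nat]" by (simp add: upt_rec)
  show ?thesis using assms
    by (auto simp: tm_step_def TM_def u split: prod.splits)
qed

lemma sweep:
  "swp m B k (G q \<sigma> b) (cs, e, fl) rest = (out, cs', e', fl') \<Longrightarrow>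
   (tm_step TM ^^ length rest) (to_nat (Sw q \<sigma> b cs e fl :: 'a st), [T0, tape1 (dn @ rest @ zs)], [h0, int (length dn)])
   = (to_nat (Sw q \<sigma> b cs' e' fl' :: 'a st), [T0, tape1 (dn @ out @ zs)], [h0, int (length dn + length rest)])"
proof (induction rest arbitrary: dn cs e fl out)
  case Nil
  then show ?case by simp
next
  case (Cons ds rest)
  obtain nd cs1 e1 fl1 where cst: "cstep m B k (G q \<sigma> b) (cs, e, fl) ds = (nd, cs1, e1, fl1)"
    by (metis prod.exhaust)
  obtain out1 st1 where sw0: "swp m B k (G q \<sigma> b) (cs1, e1, fl1) rest = (out1, st1)"
    by (metis prod.exhaust)
  have out: "out = nd # out1" and "st1 = (cs', e', fl')" using Cons.prems cst sw0 by auto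
  then have sw1: "swp m B k (G q \<sigma> b) (cs1, e1, fl1) rest = (out1, cs', e', fl')" using sw0 by simp
  have rd: "tape1 (dn @ ds # rest @ zs) (int (length dn)) = (Wk (to_nat ds) :: 'a tsym)"
    by (simp add: tape1_def nth_append)
  have "tm_step TM (to_nat (Sw q \<sigma> b cs e fl :: 'a st), [T0, tape1 (dn @ (ds # rest) @ zs)], [h0, int (length dn)])
     = (to_nat (Sw q \<sigma> b cs1 e1 fl1), [T0, tape1 ((dn @ [nd]) @ rest @ zs)], [h0, int (length (dn @ [nd]))])"
    using rd cst by (simp add: step2 raw_def tape1_upd)
  then show ?case using Cons.IH[OF sw1, of "dn @ [nd]"] out
    by (simp add: funpow_Suc_right del: funpow.simps)
qed

lemma back_run:
  assumes "j < length cells" "s \<le> j + 1"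
  shows "(tm_step TM ^^ s) (to_nat (Back q fl :: 'a st), [T0, tape1 cells], [h0, int j])
     = (to_nat (Back q fl :: 'a st), [T0, tape1 cells], [h0, int j - int s])"
  using assms(2)
proof (induction s)
  case 0
  then show ?case by simp
next
  case (Suc s)
  have "0 \<le> int j - int s" "int j - int s < int (length cells)" using Suc.prems assms(1) by auto
  then have rd: "tape1 cells (int j - int s) = (Wk (to_nat (cells ! nat (int j - int s))) :: 'a tsym)"
    by (simp add: tape1_def)
  show ?case using Suc rd by (simp add: step2 raw_def fun_upd_idem_iff)
qed

lemma back_end:
  "tm_step TM (to_nat (Back q fl :: 'a st), [T0, tape1 cells], [h0, -1]) = (to_nat (Start q fl :: 'a st), [T0, tape1 cells], [h0, 0])"
  by (simp add: step2 raw_def tape1_out fun_upd_idem_iff)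

definition uv :: "nat list list \<Rightarrow> nat \<Rightarrow> int" where
  "uv c i = int (val B c (2*i)) - int (val B c (2*i+1))"

definition rep :: "(nat \<Rightarrow> rat) \<Rightarrow> nat list list \<Rightarrow> bool" where
  "rep v c \<longleftrightarrow> (\<forall>ds\<in>set c. cellok m B ds) \<and> uv c k > 0 \<and> (\<forall>i<k. v i * of_int (uv c k) = of_int (uv c i))"

lemma k_pos: "k \<ge> 1" using wfA by (simp add: rtDVA_def)

lemma sum_pairs: "(\<Sum>i<2*K. f i) = (\<Sum>i<K. f (2*i) + f (2*i+1))" for f :: "nat \<Rightarrow> int"
  by (induction K) (auto simp: sum.distrib)

lemma nat_diff_int: "int (nat e) - int (nat (- e)) = e" by simp

lemma lin:
  assumes "\<forall>j<m. val B c' j = (\<Sum>i<m. val B c i * G q \<sigma> b i j)" "j \<le> k"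
  shows "uv c' j = (\<Sum>i<k+1. uv c i * E q \<sigma> b i j)"
proof -
  have j: "2*j < m" "2*j+1 < m" using assms(2) by (auto simp: m_def)
  define x where "x i = int (val B c i)" for i
  have "uv c' j = (\<Sum>i<m. x i * int (G q \<sigma> b i (2*j))) - (\<Sum>i<m. x i * int (G q \<sigma> b i (2*j+1)))"
    using assms(1) j by (simp add: uv_def x_def of_nat_sum)
  also have "\<dots> = (\<Sum>i<m. x i * (int (G q \<sigma> b i (2*j)) - int (G q \<sigma> b i (2*j+1))))"
    by (simp add: sum_subtractf algebra_simps)
  also have "\<dots> = (\<Sum>i<k+1. x (2*i) * (int (G q \<sigma> b (2*i) (2*j)) - int (G q \<sigma> b (2*i) (2*j+1)))
       + x (2*i+1) * (int (G q \<sigma> b (2*i+1) (2*j)) - int (G q \<sigma> b (2*i+1) (2*j+1))))"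
    unfolding m_def by (rule sum_pairs)
  also have "\<dots> = (\<Sum>i<k+1. uv c i * E q \<sigma> b i j)"
  proof (rule sum.cong)
    fix i assume "i \<in> {..<k+1}"
    have a: "int (G q \<sigma> b (2*i) (2*j)) - int (G q \<sigma> b (2*i) (2*j+1)) = E q \<sigma> b i j"
      by (simp add: G_def)
    have c: "int (G q \<sigma> b (2*i+1) (2*j)) - int (G q \<sigma> b (2*i+1) (2*j+1)) = - E q \<sigma> b i j"
      by (simp add: G_def)
    show "x (2*i) * (int (G q \<sigma> b (2*i) (2*j)) - int (G q \<sigma> b (2*i) (2*j+1)))
       + x (2*i+1) * (int (G q \<sigma> b (2*i+1) (2*j)) - int (G q \<sigma> b (2*i+1) (2*j+1))) = uv c i * E q \<sigma> b i j"
      unfolding a c by (simp add: uv_def x_def algebra_simps)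
  qed simp
  finally show ?thesis .
qed

lemma rep_step:
  assumes "rep v c" "q \<in> Qs" "\<forall>ds\<in>set c'. cellok m B ds"
    "\<forall>j<m. val B c' j = (\<Sum>i<m. val B c i * G q \<sigma> b i j)"
  shows "rep (vmult k v (snd (dva_delta A q \<sigma> b))) c'"
proof -
  define M where "M = snd (dva_delta A q \<sigma> b)"
  define u where "u = uv c"
  have MX: "i < k \<Longrightarrow> j < k \<Longrightarrow> M i j \<in> Xr" for i j
    unfolding Xr_def M_def using assms(2) by (intro UnI1 image_eqI[where x="(q, \<sigma>, b, i, j)"]) auto
  have uk: "uv c' k = u k * D"
  proof -
    have "uv c' k = (\<Sum>i<k+1. u i * E q \<sigma> b i k)" using lin[OF assms(4)] by (simp add: u_def)
    also have "\<dots> = (\<Sum>i<k. u i * E q \<sigma> b i k) + u k * E q \<sigma> b k k" by simp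
    also have "\<dots> = u k * D" by (simp add: E_def)
    finally show ?thesis .
  qed
  have uj: "uv c' j = (\<Sum>i<k. u i * nz (M i j))" if "j < k" for j
  proof -
    have "uv c' j = (\<Sum>i<k+1. u i * E q \<sigma> b i j)" using lin[OF assms(4)] that by (simp add: u_def)
    also have "\<dots> = (\<Sum>i<k. u i * E q \<sigma> b i j) + u k * E q \<sigma> b k j" by simp
    also have "\<dots> = (\<Sum>i<k. u i * nz (M i j))" using that by (simp add: E_def M_def)
    finally show ?thesis .
  qed
  have r: "u k > 0" "\<And>i. i < k \<Longrightarrow> v i * of_int (u k) = of_int (u i)" using assms(1) by (auto simp: rep_def u_def)
  have "vmult k v M j * of_int (uv c' j') = of_int (uv c' j)" if "j < k" "j' = k" for j j'
  proof -
    have "vmult k v M j * of_int (uv c' j') = (\<Sum>i<k. v i * M i j) * (of_int (u k) * of_int D)"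
      using that uk by (simp add: vmult_def)
    also have "\<dots> = (\<Sum>i<k. (v i * M i j) * (of_int (u k) * of_int D))" by (rule sum_distrib_right)
    also have "\<dots> = (\<Sum>i<k. (v i * of_int (u k)) * (of_int D * M i j))"
      by (intro sum.cong) (simp_all add: algebra_simps)
    also have "\<dots> = (\<Sum>i<k. of_int (u i) * of_int (nz (M i j)))"
      using r(2) nz_eq[OF MX[OF _ that(1)]] by (intro sum.cong) auto
    also have "\<dots> = of_int (uv c' j)" using uj[OF that(1)] by simp
    finally show ?thesis .
  qed
  moreover have "uv c' k > 0" using uk r(1) D_pos by simp
  ultimately show ?thesis using assms(3) by (auto simp: rep_def M_def)
qed

lemma rep_flag: assumes "rep v c" shows "Zv B k c = 0 \<longleftrightarrow> v 0 = 1"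
proof -
  have z: "Zv B k c = uv c 0 - uv c k" by (simp add: Zv_def uv_def)
  have p: "uv c k > 0" and e: "v 0 * of_int (uv c k) = of_int (uv c 0)"
    using assms k_pos by (auto simp: rep_def)
  show ?thesis
  proof
    assume "Zv B k c = 0"
    then have "uv c 0 = uv c k" using z by simp
    then have "v 0 * of_int (uv c k) = 1 * of_int (uv c k)" using e by simp
    then show "v 0 = 1" using p by (simp del: mult_1)
  next
    assume "v 0 = 1"
    then have "uv c 0 = uv c k" using e by simp
    then show "Zv B k c = 0" using z by simp
  qed
qed

lemma val_zeros: "i < m \<Longrightarrow> val B [zeros] i = 0" by (simp add: zeros_def)

lemma sweepall:
  assumes "\<forall>ds\<in>set cells. cellok m B ds" "q \<in> Qs"
    "swp m B k (G q \<sigma> b) (zeros, 0, True) cells = (out, cs', e', fl')"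
    "cstep m B k (G q \<sigma> b) (cs', e', fl') zeros = (nd, cs'', e'', fl'')"
  shows "(\<forall>ds\<in>set (out @ [nd]). cellok m B ds) \<and> length out = length cells
    \<and> (\<forall>j<m. val B (out @ [nd]) j = (\<Sum>i<m. val B cells i * G q \<sigma> b i j))
    \<and> ((fl'' \<and> e'' = 0) \<longleftrightarrow> Zv B k (out @ [nd]) = 0)"
proof -
  have W: "swp m B k (G q \<sigma> b) (zeros, 0, True) (cells @ [zeros]) = (out @ [nd], cs'', e'', fl'')"
    using assms(3,4) by (simp add: swp_append)
  have col: "\<forall>j<m. (\<Sum>i<m. G q \<sigma> b i j) \<le> S" using colsum assms(2) by blast
  have zc: "length zeros = m" "\<forall>c\<in>set zeros. c \<le> S" by (auto simp: zeros_def)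
  have a: "\<forall>ds\<in>set (out @ [nd]). cellok m B ds"
    using swp_bounds[of "cells @ [zeros]" m B _ S zeros k 0 True, OF _ col zc B_gt(2)] assms(1) zeros_ok W by auto
  have bc: "length cs' = m \<and> (\<forall>c\<in>set cs'. c \<le> S)"
    using swp_bounds[of cells m B _ S zeros k 0 True, OF assms(1) col zc B_gt(2)] assms(3) by auto
  have cs'': "cs'' = map (\<lambda>x. x div B) (newd m (G q \<sigma> b) zeros cs')" using assms(4) by (auto simp: cstep_def Let_def)
  have cz: "j < m \<Longrightarrow> cs'' ! j = 0" for j
  proof -
    assume j: "j < m"
    have "cs' ! j \<le> S" using bc j by auto
    then have "cs' ! j < B" using B_gt(1) by linarith
    then show ?thesis using j by (simp add: cs'' newd_def zeros_def)
  qed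
  have b: "\<forall>j<m. val B (out @ [nd]) j = (\<Sum>i<m. val B cells i * G q \<sigma> b i j)"
  proof (intro allI impI)
    fix j assume j: "j < m"
    have "(\<Sum>i<m. val B (cells @ [zeros]) i * G q \<sigma> b i j) + zeros ! j
      = val B (out @ [nd]) j + B ^ length (cells @ [zeros]) * cs'' ! j"
      using swp_arith[OF zc(1) j B_gt(2), of "cells @ [zeros]" "G q \<sigma> b" k 0 True] W by simp
    moreover have "(\<Sum>i<m. val B (cells @ [zeros]) i * G q \<sigma> b i j) = (\<Sum>i<m. val B cells i * G q \<sigma> b i j)"
      by (intro sum.cong) (auto simp: val_append zeros_def)
    ultimately show "val B (out @ [nd]) j = (\<Sum>i<m. val B cells i * G q \<sigma> b i j)"
      using cz[OF j] j by (simp add: zeros_def)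
  qed
  have c: "((fl'' \<and> e'' = 0) \<longleftrightarrow> Zv B k (out @ [nd]) = 0)"
    using swp_cmp[OF B_gt(2), of m k "G q \<sigma> b" zeros 0 True "cells @ [zeros]"] W by auto
  have "length out = length cells" using swp_len[of m B k "G q \<sigma> b" "(zeros, 0, True)" cells] assms(3) by simp
  then show ?thesis using a b c by simp
qed

lemma sweep_heads:
  assumes "s \<le> length cells"
  shows "snd (snd ((tm_step TM ^^ s) (to_nat (Sw q \<sigma> b cs e fl :: 'a st), [T0, tape1 cells], [h0, 0]))) = [h0, int s]"
proof -
  obtain out st where sw: "swp m B k (G q \<sigma> b) (cs, e, fl) (take s cells) = (out, st)" by (metis prod.exhaust)
  obtain cs' e' fl' where "st = (cs', e', fl')" by (metis prod.exhaust)
  then have sw': "swp m B k (G q \<sigma> b) (cs, e, fl) (take s cells) = (out, cs', e', fl')" using sw by simp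
  have "cells = [] @ take s cells @ drop s cells" by simp
  then have "(tm_step TM ^^ length (take s cells)) (to_nat (Sw q \<sigma> b cs e fl :: 'a st), [T0, tape1 cells], [h0, 0])
     = (to_nat (Sw q \<sigma> b cs' e' fl' :: 'a st), [T0, tape1 ([] @ out @ drop s cells)], [h0, int (length [] + length (take s cells))])"
    using sweep[OF sw', of T0 "[]" "drop s cells" h0] by (metis list.size(3) of_nat_0)
  moreover have "length (take s cells) = s" using assms by simp
  ultimately show ?thesis by simp
qed

end



lemma fp: "(f ^^ (a + b)) x = (f ^^ b) ((f ^^ a) x)"
  by (metis add.commute comp_apply funpow_add)

context sim begin

lemma seg_common:
  fixes T0 :: "int \<Rightarrow> 'a tsym" and h0 :: int and \<sigma> :: "'a esym" and b :: bool
  assumes "rep v cells" "q \<in> Qs" "cells \<noteq> []"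
  defines "L \<equiv> length cells"
  defines "c0 \<equiv> (to_nat (Sw q \<sigma> b zeros 0 True :: 'a st), [T0, tape1 cells], [h0, 0])"
  shows "\<exists>cells' fl2. rep (vmult k v (snd (dva_delta A q \<sigma> b))) cells' \<and> length cells' = L + 1 \<and>
     (fl2 \<longleftrightarrow> vmult k v (snd (dva_delta A q \<sigma> b)) 0 = 1) \<and>
     (tm_step TM ^^ (L + 1)) c0 =
       (to_nat (if \<sigma> = Dollar then (if fst (dva_delta A q \<sigma> b) \<in> dva_acc A \<and> fl2 then Acc else Rej)
                else Back (fst (dva_delta A q \<sigma> b)) fl2 :: 'a st), [T0, tape1 cells'], [h0, int L - 1]) \<and>
     (\<forall>s \<le> L. snd (snd ((tm_step TM ^^ s) c0)) = [h0, int s])"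
proof -
  have ok: "\<forall>ds\<in>set cells. cellok m B ds" using assms(1) by (simp add: rep_def)
  obtain out st where sw0: "swp m B k (G q \<sigma> b) (zeros, 0, True) cells = (out, st)" by (metis prod.exhaust)
  obtain cs' e' fl' where "st = (cs', e', fl')" by (metis prod.exhaust)
  with sw0 have sw: "swp m B k (G q \<sigma> b) (zeros, 0, True) cells = (out, cs', e', fl')" by simp
  obtain nd st2 where cs0: "cstep m B k (G q \<sigma> b) (cs', e', fl') zeros = (nd, st2)" by (metis prod.exhaust)
  obtain cs'' e'' fl'' where "st2 = (cs'', e'', fl'')" by (metis prod.exhaust)
  with cs0 have cs: "cstep m B k (G q \<sigma> b) (cs', e', fl') zeros = (nd, cs'', e'', fl'')" by simp
  note SA = sweepall[OF ok assms(2) sw cs]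
  define v' where "v' = vmult k v (snd (dva_delta A q \<sigma> b))"
  have rep': "rep v' (out @ [nd])" unfolding v'_def using rep_step[OF assms(1,2)] SA by blast
  have fl: "(fl'' \<and> e'' = 0) \<longleftrightarrow> v' 0 = 1" using SA rep_flag[OF rep'] by simp
  have lo: "length out = L" using SA by (simp add: L_def)
  have c1: "(tm_step TM ^^ L) c0 = (to_nat (Sw q \<sigma> b cs' e' fl' :: 'a st), [T0, tape1 out], [h0, int L])"
    using sweep[OF sw, of T0 "[]" "[]" h0] unfolding c0_def L_def by simp
  have rdB: "tape1 out (int L) = (Blank :: 'a tsym)" using lo by (simp add: tape1_def)
  have c2: "tm_step TM (to_nat (Sw q \<sigma> b cs' e' fl' :: 'a st), [T0, tape1 out], [h0, int L])
     = (to_nat (if \<sigma> = Dollar then (if fst (dva_delta A q \<sigma> b) \<in> dva_acc A \<and> (fl'' \<and> e'' = 0) then Acc else Rej)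
                else Back (fst (dva_delta A q \<sigma> b)) (fl'' \<and> e'' = 0) :: 'a st), [T0, tape1 (out @ [nd])], [h0, int L - 1])"
    using rdB cs lo by (simp add: step2 raw_def tape1_snoc[symmetric])
  have "(tm_step TM ^^ (L + 1)) c0 = tm_step TM ((tm_step TM ^^ L) c0)" by simp
  also have "\<dots> = (to_nat (if \<sigma> = Dollar then (if fst (dva_delta A q \<sigma> b) \<in> dva_acc A \<and> (fl'' \<and> e'' = 0) then Acc else Rej)
                else Back (fst (dva_delta A q \<sigma> b)) (fl'' \<and> e'' = 0) :: 'a st), [T0, tape1 (out @ [nd])], [h0, int L - 1])"
    using c1 c2 by simp
  finally have run: "(tm_step TM ^^ (L + 1)) c0 = \<dots>" .
  have hd: "\<forall>s \<le> L. snd (snd ((tm_step TM ^^ s) c0)) = [h0, int s]"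
    using sweep_heads unfolding c0_def L_def by blast
  have len: "length (out @ [nd]) = L + 1" using lo by simp
  show ?thesis
    apply (rule exI[of _ "out @ [nd]"], rule exI[of _ "fl'' \<and> e'' = 0"])
    using rep' fl run hd len unfolding v'_def by (intro conjI) assumption+
qed

definition hb :: "int \<Rightarrow> int \<Rightarrow> 'a tm_config \<Rightarrow> bool" where
  "hb h0 W c \<longleftrightarrow> (\<exists>h1. snd (snd c) = [h0, h1] \<and> -1 \<le> h1 \<and> h1 \<le> W)"

lemma seg:
  fixes T0 :: "int \<Rightarrow> 'a tsym" and h0 :: int and \<sigma> :: "'a esym" and b :: bool
  assumes "rep v cells" "q \<in> Qs" "cells \<noteq> []" "\<sigma> \<noteq> Dollar"
  defines "L \<equiv> length cells"
  defines "c0 \<equiv> (to_nat (Sw q \<sigma> b zeros 0 True :: 'a st), [T0, tape1 cells], [h0, 0])"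
  shows "\<exists>cells'. rep (vmult k v (snd (dva_delta A q \<sigma> b))) cells' \<and> length cells' = L + 1 \<and>
     (tm_step TM ^^ (2 * L + 2)) c0 =
       (to_nat (Start (fst (dva_delta A q \<sigma> b)) (vmult k v (snd (dva_delta A q \<sigma> b)) 0 = 1) :: 'a st), [T0, tape1 cells'], [h0, 0]) \<and>
     (\<forall>s \<le> 2 * L + 2. hb h0 (int L) ((tm_step TM ^^ s) c0))"
proof -
  obtain cells' fl2 where R: "rep (vmult k v (snd (dva_delta A q \<sigma> b))) cells'" "length cells' = L + 1"
     "(fl2 \<longleftrightarrow> vmult k v (snd (dva_delta A q \<sigma> b)) 0 = 1)"
     "(tm_step TM ^^ (L + 1)) c0 = (to_nat (Back (fst (dva_delta A q \<sigma> b)) fl2 :: 'a st), [T0, tape1 cells'], [h0, int L - 1])"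
     "\<forall>s \<le> L. snd (snd ((tm_step TM ^^ s) c0)) = [h0, int s]"
    using seg_common[OF assms(1-3), of \<sigma> b T0 h0] assms(4) unfolding L_def c0_def by auto
  have L1: "L \<ge> 1" using assms(3) by (simp add: L_def Suc_le_eq)
  define c2 where "c2 = (to_nat (Back (fst (dva_delta A q \<sigma> b)) fl2 :: 'a st), [T0, tape1 cells'], [h0, int (L - 1)])"
  have c2e: "(tm_step TM ^^ (L + 1)) c0 = c2" using R(4) L1 by (simp add: c2_def of_nat_diff)
  have br: "(tm_step TM ^^ s') c2 = (to_nat (Back (fst (dva_delta A q \<sigma> b)) fl2 :: 'a st), [T0, tape1 cells'], [h0, int (L - 1) - int s'])"
    if "s' \<le> L" for s'
    unfolding c2_def by (rule back_run) (use that L1 R(2) in auto)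
  have c3: "(tm_step TM ^^ L) c2 = (to_nat (Back (fst (dva_delta A q \<sigma> b)) fl2 :: 'a st), [T0, tape1 cells'], [h0, -1])"
    using br[of L] L1 by (simp add: of_nat_diff)
  have "(tm_step TM ^^ (2 * L + 2)) c0 = tm_step TM ((tm_step TM ^^ L) ((tm_step TM ^^ (L + 1)) c0))"
  proof -
    have "2 * L + 2 = Suc ((L + 1) + L)" by simp
    then show ?thesis by (simp only: funpow.simps(2) comp_apply fp[of "L + 1" L])
  qed
  also have "\<dots> = (to_nat (Start (fst (dva_delta A q \<sigma> b)) fl2 :: 'a st), [T0, tape1 cells'], [h0, 0])"
    using c2e c3 back_end by simp
  finally have run: "(tm_step TM ^^ (2 * L + 2)) c0 = (to_nat (Start (fst (dva_delta A q \<sigma> b)) (vmult k v (snd (dva_delta A q \<sigma> b)) 0 = 1) :: 'a st), [T0, tape1 cells'], [h0, 0])"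
    using R(3) by simp
  have hds: "hb h0 (int L) ((tm_step TM ^^ s) c0)" if "s \<le> 2 * L + 2" for s
  proof -
    have "s \<le> L \<or> (\<exists>s'. s = (L + 1) + s' \<and> s' \<le> L) \<or> s = 2 * L + 2"
    proof (cases "s \<le> L \<or> s = 2 * L + 2")
      case False
      then have "s = (L + 1) + (s - (L + 1)) \<and> s - (L + 1) \<le> L" using that by linarith
      then show ?thesis by blast
    qed auto
    then consider "s \<le> L" | s' where "s = (L + 1) + s'" "s' \<le> L" | "s = 2 * L + 2" by blast
    then show ?thesis
    proof cases
      case 1
      then show ?thesis using R(5) by (auto simp: hb_def)
    next
      case 2
      have "(tm_step TM ^^ s) c0 = (tm_step TM ^^ s') c2" using 2(1) fp[of "L+1" s' "tm_step TM" c0] c2e by simp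
      then show ?thesis using br[OF 2(2)] 2(2) L1 by (auto simp: hb_def)
    next
      case 3
      then show ?thesis using run by (auto simp: hb_def)
    qed
  qed
  show ?thesis using R(1,2) run hds by blast
qed

lemma segD:
  fixes T0 :: "int \<Rightarrow> 'a tsym" and h0 :: int and b :: bool
  assumes "rep v cells" "q \<in> Qs" "cells \<noteq> []"
  defines "L \<equiv> length cells"
  defines "c0 \<equiv> (to_nat (Sw q Dollar b zeros 0 True :: 'a st), [T0, tape1 cells], [h0, 0])"
  shows "\<exists>cells'. (tm_step TM ^^ (L + 1)) c0 =
       (to_nat (if fst (dva_delta A q Dollar b) \<in> dva_acc A \<and> vmult k v (snd (dva_delta A q Dollar b)) 0 = 1 then Acc else Rej :: 'a st),
         [T0, tape1 cells'], [h0, int L - 1]) \<and>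
     (\<forall>s \<le> L + 1. hb h0 (int L) ((tm_step TM ^^ s) c0))"
proof -
  obtain cells' fl2 where R:
     "(fl2 \<longleftrightarrow> vmult k v (snd (dva_delta A q Dollar b)) 0 = 1)"
     "(tm_step TM ^^ (L + 1)) c0 = (to_nat (if fst (dva_delta A q Dollar b) \<in> dva_acc A \<and> fl2 then Acc else Rej :: 'a st), [T0, tape1 cells'], [h0, int L - 1])"
     "\<forall>s \<le> L. snd (snd ((tm_step TM ^^ s) c0)) = [h0, int s]"
    using seg_common[OF assms(1-3), of Dollar b T0 h0] unfolding L_def c0_def by auto
  have L1: "L \<ge> 1" using assms(3) by (simp add: L_def Suc_le_eq)
  have "hb h0 (int L) ((tm_step TM ^^ s) c0)" if "s \<le> L + 1" for s
  proof (cases "s \<le> L")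
    case True
    then show ?thesis using R(3) by (auto simp: hb_def)
  next
    case False
    then have "s = L + 1" using that by simp
    then show ?thesis using R(2) L1 by (auto simp: hb_def)
  qed
  then show ?thesis using R(1,2) by auto
qed

end



lemma range_comp:
  assumes "\<forall>s\<le>a. P ((f ^^ s) x)" "\<forall>s\<le>b. P ((f ^^ s) ((f ^^ a) x))"
  shows "\<forall>s\<le>a + b. P ((f ^^ s) x)"
proof (intro allI impI)
  fix s assume s: "s \<le> a + b"
  show "P ((f ^^ s) x)"
  proof (cases "s \<le> a")
    case True then show ?thesis using assms(1) by blast
  next
    case False
    then have "s = a + (s - a)" "s - a \<le> b" using s by auto
    then show ?thesis using assms(2) fp[of a "s - a" f x] by metis
  qed
qed

definition inp :: "'a list \<Rightarrow> int \<Rightarrow> 'a tsym" where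
  "inp w = (\<lambda>p. if 0 \<le> p \<and> p < int (length w) then Inp (w ! nat p) else Blank)"

definition box :: "int \<Rightarrow> int \<Rightarrow> 'a tm_config \<Rightarrow> bool" where
  "box W0 W1 c \<longleftrightarrow> (\<exists>h0 h1. snd (snd c) = [h0, h1] \<and> 0 \<le> h0 \<and> h0 \<le> W0 \<and> -1 \<le> h1 \<and> h1 \<le> W1)"

context sim begin

lemma hb_box: "hb h0 W c \<Longrightarrow> 0 \<le> h0 \<Longrightarrow> h0 \<le> W0 \<Longrightarrow> W \<le> W1 \<Longrightarrow> box W0 W1 c"
  by (auto simp: hb_def box_def)

lemma dva_step_eq: "dva_step k A (q, v) \<sigma> = (fst (dva_delta A q \<sigma> (v 0 = 1)), vmult k v (snd (dva_delta A q \<sigma> (v 0 = 1))))"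
  by (simp add: dva_step_def split: prod.splits)

lemma start_sym:
  assumes "drop pos w = a # r"
  shows "tm_step TM (to_nat (Start q fl :: 'a st), [inp w, tape1 cells], [int pos, 0])
     = (to_nat (Sw q (Sym a) fl zeros 0 True :: 'a st), [inp w, tape1 cells], [int pos + 1, 0])"
proof -
  have p: "pos < length w" using assms by (metis drop_all list.distinct(1) not_le)
  have "w ! pos = a" using hd_drop_conv_nth[OF p] assms by simp
  note p this
  then have "inp w (int pos) = Inp a" by (simp add: inp_def)
  then show ?thesis by (simp add: step2 raw_def fun_upd_idem_iff)
qed

lemma start_dollar:
  assumes "drop pos w = []"
  shows "tm_step TM (to_nat (Start q fl :: 'a st), [inp w, tape1 cells], [int pos, 0])
     = (to_nat (Sw q Dollar fl zeros 0 True :: 'a st), [inp w, tape1 cells], [int pos, 0])"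
proof -
  have "inp w (int pos) = Blank" using assms by (simp add: inp_def)
  then show ?thesis by (simp add: step2 raw_def fun_upd_idem_iff)
qed

definition acc_of :: "nat \<Rightarrow> (nat \<Rightarrow> rat) \<Rightarrow> 'a list \<Rightarrow> bool" where
  "acc_of q v r \<longleftrightarrow> (let c = foldl (dva_step k A) (q, v) (map Sym r @ [Dollar]) in fst c \<in> dva_acc A \<and> snd c 0 = 1)"

lemma main:
  fixes w :: "'a list"
  shows "rep v cells \<Longrightarrow> q \<in> Qs \<Longrightarrow> cells \<noteq> [] \<Longrightarrow> drop pos w = r \<Longrightarrow> pos + length r = length w \<Longrightarrow>
   length cells + length r \<le> length w + 2 \<Longrightarrow>
   \<exists>t. t \<le> (length r + 1) * (2 * (length cells + length r) + 3) \<and>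
     fst ((tm_step TM ^^ t) (to_nat (Start q (v 0 = 1) :: 'a st), [inp w, tape1 cells], [int pos, 0]))
        = to_nat (if acc_of q v r then Acc else Rej :: 'a st) \<and>
     (\<forall>s \<le> t. box (int (length w)) (int (length w) + 2)
        ((tm_step TM ^^ s) (to_nat (Start q (v 0 = 1) :: 'a st), [inp w, tape1 cells], [int pos, 0])))"
proof (induction r arbitrary: q v cells pos)
  case Nil
  define L where "L = length cells"
  define c0 where "c0 = (to_nat (Start q (v 0 = 1) :: 'a st), [inp w, tape1 cells], [int pos, 0])"
  define c1 where "c1 = (to_nat (Sw q Dollar (v 0 = 1) zeros 0 True :: 'a st), [inp w, tape1 cells], [int pos, 0])"
  have c01: "tm_step TM c0 = c1" unfolding c0_def c1_def by (rule start_dollar) (use Nil in simp)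
  obtain cells' where S: "(tm_step TM ^^ (L + 1)) c1 =
       (to_nat (if fst (dva_delta A q Dollar (v 0 = 1)) \<in> dva_acc A \<and> vmult k v (snd (dva_delta A q Dollar (v 0 = 1))) 0 = 1 then Acc else Rej :: 'a st),
         [inp w, tape1 cells'], [int pos, int L - 1])"
     "\<forall>s \<le> L + 1. hb (int pos) (int L) ((tm_step TM ^^ s) c1)"
    using segD[OF Nil(1,2,3), of "v 0 = 1" "inp w" "int pos"] unfolding c1_def L_def by blast
  have acc: "acc_of q v [] \<longleftrightarrow> fst (dva_delta A q Dollar (v 0 = 1)) \<in> dva_acc A \<and> vmult k v (snd (dva_delta A q Dollar (v 0 = 1))) 0 = 1"
    by (simp add: acc_of_def dva_step_eq)
  have run: "(tm_step TM ^^ (1 + (L + 1))) c0 = (tm_step TM ^^ (L + 1)) c1"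
    using fp[of 1 "L + 1" "tm_step TM" c0] c01 by simp
  have pw: "pos = length w" using Nil by simp
  have h1: "\<forall>s\<le>1. box (int (length w)) (int (length w) + 2) ((tm_step TM ^^ s) c0)"
  proof (intro allI impI)
    fix s :: nat assume "s \<le> 1"
    then have "s = 0 \<or> s = 1" by auto
    then show "box (int (length w)) (int (length w) + 2) ((tm_step TM ^^ s) c0)"
      using c01 pw by (auto simp: c0_def c1_def box_def)
  qed
  have h2: "\<forall>s\<le>L + 1. box (int (length w)) (int (length w) + 2) ((tm_step TM ^^ s) ((tm_step TM ^^ 1) c0))"
    using S(2) c01 Nil(6) pw by (auto intro: hb_box simp: L_def)
  show ?case
    apply (rule exI[of _ "1 + (L + 1)"])
    using run S(1) acc range_comp[OF h1 h2] by (auto simp: L_def c0_def)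
next
  case (Cons a r)
  define L where "L = length cells"
  define b where "b = (v 0 = 1)"
  define q' where "q' = fst (dva_delta A q (Sym a) b)"
  define v' where "v' = vmult k v (snd (dva_delta A q (Sym a) b))"
  define c0 where "c0 = (to_nat (Start q (v 0 = 1) :: 'a st), [inp w, tape1 cells], [int pos, 0])"
  define c1 where "c1 = (to_nat (Sw q (Sym a) b zeros 0 True :: 'a st), [inp w, tape1 cells], [int (Suc pos), 0])"
  have c01: "tm_step TM c0 = c1" unfolding c0_def c1_def b_def using start_sym[OF Cons(5)] by simp
  obtain cells' where S: "rep v' cells'" "length cells' = L + 1"
     "(tm_step TM ^^ (2 * L + 2)) c1 = (to_nat (Start q' (v' 0 = 1) :: 'a st), [inp w, tape1 cells'], [int (Suc pos), 0])"
     "\<forall>s \<le> 2 * L + 2. hb (int (Suc pos)) (int L) ((tm_step TM ^^ s) c1)"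
    using seg[OF Cons(2,3,4), of "Sym a" b "inp w" "int (Suc pos)"] unfolding c1_def L_def q'_def v'_def by auto
  have q': "q' \<in> Qs" using wfA Cons(3) by (simp add: rtDVA_def q'_def)
  have dr: "drop (Suc pos) w = r" using Cons(5) by (metis drop_Suc list.sel(3) tl_drop)
  obtain t' where T: "t' \<le> (length r + 1) * (2 * (length cells' + length r) + 3)"
     "fst ((tm_step TM ^^ t') (to_nat (Start q' (v' 0 = 1) :: 'a st), [inp w, tape1 cells'], [int (Suc pos), 0]))
        = to_nat (if acc_of q' v' r then Acc else Rej :: 'a st)"
     "\<forall>s \<le> t'. box (int (length w)) (int (length w) + 2)
        ((tm_step TM ^^ s) (to_nat (Start q' (v' 0 = 1) :: 'a st), [inp w, tape1 cells'], [int (Suc pos), 0]))"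
    if "\<And>t'. t' \<le> (length r + 1) * (2 * (length cells' + length r) + 3) \<Longrightarrow>
     fst ((tm_step TM ^^ t') (to_nat (Start q' (v' 0 = 1) :: 'a st), [inp w, tape1 cells'], [int (Suc pos), 0]))
        = to_nat (if acc_of q' v' r then Acc else Rej :: 'a st) \<Longrightarrow>
     \<forall>s \<le> t'. box (int (length w)) (int (length w) + 2)
        ((tm_step TM ^^ s) (to_nat (Start q' (v' 0 = 1) :: 'a st), [inp w, tape1 cells'], [int (Suc pos), 0])) \<Longrightarrow> thesis"
    for thesis
  proof -
    have ne: "cells' \<noteq> []" using S(2) by auto
    have a1: "Suc pos + length r = length w" using Cons(6) by simp
    have a2: "length cells' + length r \<le> length w + 2" using Cons(7) S(2) by (simp add: L_def)
    show ?thesis using Cons.IH[OF S(1) q' ne dr a1 a2] that by (auto simp: L_def)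
  qed
  have acc: "acc_of q v (a # r) = acc_of q' v' r"
    by (simp add: acc_of_def dva_step_eq q'_def v'_def b_def)
  have run: "(tm_step TM ^^ (1 + (2 * L + 2) + t')) c0 = (tm_step TM ^^ t') ((tm_step TM ^^ (2 * L + 2)) c1)"
    using fp[of "1 + (2 * L + 2)" t' "tm_step TM" c0] fp[of 1 "2 * L + 2" "tm_step TM" c0] c01 by simp
  have pw: "Suc pos + length r = length w" using Cons(6) by simp
  have h1: "\<forall>s\<le>1. box (int (length w)) (int (length w) + 2) ((tm_step TM ^^ s) c0)"
  proof (intro allI impI)
    fix s :: nat assume "s \<le> 1"
    then have "s = 0 \<or> s = 1" by auto
    then show "box (int (length w)) (int (length w) + 2) ((tm_step TM ^^ s) c0)"
      using c01 pw by (auto simp: c0_def c1_def box_def)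
  qed
  have h2: "\<forall>s\<le>2 * L + 2. box (int (length w)) (int (length w) + 2) ((tm_step TM ^^ s) ((tm_step TM ^^ 1) c0))"
    using S(4) c01 Cons(7) pw by (auto intro: hb_box simp: L_def)
  have h3: "\<forall>s\<le>t'. box (int (length w)) (int (length w) + 2) ((tm_step TM ^^ s) ((tm_step TM ^^ (1 + (2 * L + 2))) c0))"
    using T(3) S(3) c01 fp[of 1 "2 * L + 2" "tm_step TM" c0] by simp
  have bound: "1 + (2 * L + 2) + t' \<le> (length (a # r) + 1) * (2 * (length cells + length (a # r)) + 3)"
  proof -
    define X where "X = 2 * (L + length r + 1) + 3"
    have "t' \<le> (length r + 1) * X" using T(1) S(2) by (simp add: X_def algebra_simps)
    moreover have "(length (a # r) + 1) * (2 * (length cells + length (a # r)) + 3) = (length r + 1) * X + X"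
      by (simp add: X_def L_def algebra_simps)
    moreover have "1 + (2 * L + 2) \<le> X" by (simp add: X_def)
    ultimately show ?thesis by linarith
  qed
  show ?case
    apply (rule exI[of _ "1 + (2 * L + 2) + t'"])
    using run S(3) T(2) acc bound range_comp[OF range_comp[OF h1 h2] h3] by (auto simp: c0_def)
qed

end



context sim begin

lemma uv_init: "i \<le> k \<Longrightarrow> uv [cell0] i = u0 i"
proof -
  assume i: "i \<le> k"
  have "2*i < m" "2*i+1 < m" using i by (auto simp: m_def)
  then show ?thesis by (simp add: uv_def cell0_def x0_def)
qed

lemma rep_init: "rep (dva_vec A) [cell0]"
proof -
  have vX: "i < k \<Longrightarrow> dva_vec A i \<in> Xr" for i by (auto simp: Xr_def)
  have "uv [cell0] k = D" using uv_init[of k] by (simp add: u0_def)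
  moreover have "i < k \<Longrightarrow> uv [cell0] i = nz (dva_vec A i)" for i using uv_init[of i] by (simp add: u0_def)
  ultimately show ?thesis using cell0_ok D_pos nz_eq[OF vX] by (auto simp: rep_def mult.commute)
qed

lemma tape1_nil: "tape1 [] = (\<lambda>_. Blank)" by (rule ext) (simp add: tape1_def)

lemma init_step: "tm_step TM (tm_init TM w) =
   (to_nat (Sw (dva_init A) Cent (dva_vec A 0 = 1) zeros 0 True :: 'a st), [inp w, tape1 [cell0]], [0, 0])"
proof -
  have "tm_init TM w = (to_nat (Init :: 'a st), [inp w, tape1 []], [0, 0])"
    by (simp add: tm_init_def TM_def inp_def tape1_nil numeral_2_eq_2)
  moreover have "(tape1 [])(0 := Wk (to_nat cell0)) = (tape1 [cell0] :: int \<Rightarrow> 'a tsym)"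
    using tape1_snoc[of "[]" cell0] by simp
  ultimately show ?thesis by (simp add: step2 raw_def)
qed

lemma time_bound: "5 + (n + 1) * (2 * (2 + n) + 3) \<le> 40 * n ^ 3 + (40::nat)"
proof -
  have e: "(n + 1) * (2 * (2 + n) + 3) = 2 * n^2 + 9 * n + 7" by (simp add: algebra_simps power2_eq_square)
  have a: "n^2 \<le> n^3" "n \<le> n^3"
  proof -
    show "n^2 \<le> n^3" by (cases n) (auto intro: power_increasing)
    show "n \<le> n^3" by (cases n) (auto intro: power_increasing[of 1 3, simplified])
  qed
  show ?thesis using e a by linarith
qed

lemma space_card:
  fixes H :: "(nat \<times> int) set" and n :: nat
  assumes "H \<subseteq> ({0} \<times> {0..int n}) \<union> ({1} \<times> {-1..int n + 2})"
  shows "card H \<le> 40 * n + 40"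
proof -
  have f: "finite (({0::nat} \<times> {0..int n}) \<union> ({1} \<times> {-1..int n + 2}))" by simp
  have "card H \<le> card (({0::nat} \<times> {0..int n}) \<union> ({1} \<times> {-1..int n + 2}))" by (rule card_mono[OF f assms])
  also have "\<dots> \<le> card ({0::nat} \<times> {0..int n}) + card ({1::nat} \<times> {-1..int n + 2})" by (rule card_Un_le)
  also have "\<dots> = (n + 1) + (n + 4)" by (simp add: card_cartesian_product)
  finally show ?thesis by simp
qed

lemma decides: "tm_decides_within TM (dva_lang k A) (\<lambda>n. 40 * n ^ 3 + 40) (\<lambda>n. 40 * n + 40)"
  unfolding tm_decides_within_def
proof
  fix w :: "'a list"
  define n where "n = length w"
  define b0 where "b0 = (dva_vec A 0 = 1)"
  define q1 where "q1 = fst (dva_delta A (dva_init A) Cent b0)"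
  define v1 where "v1 = vmult k (dva_vec A) (snd (dva_delta A (dva_init A) Cent b0))"
  define c1 where "c1 = (to_nat (Sw (dva_init A) Cent b0 zeros 0 True :: 'a st), [inp w, tape1 [cell0]], [0::int, 0::int])"
  have c01: "tm_step TM (tm_init TM w) = c1" using init_step by (simp add: c1_def b0_def)
  have init: "dva_init A \<in> Qs" using wfA by (simp add: rtDVA_def)
  obtain cells' where S: "rep v1 cells'" "length cells' = 2"
     "(tm_step TM ^^ 4) c1 = (to_nat (Start q1 (v1 0 = 1) :: 'a st), [inp w, tape1 cells'], [int 0, 0])"
     "\<forall>s \<le> 4. hb 0 1 ((tm_step TM ^^ s) c1)"
    using seg[OF rep_init init, where \<sigma>=Cent and b=b0 and ?T0.0="inp w" and ?h0.0=0] unfolding c1_def q1_def v1_def by auto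
  have q1: "q1 \<in> Qs" using wfA init by (simp add: rtDVA_def q1_def)
  obtain t' where T: "t' \<le> (length w + 1) * (2 * (length cells' + length w) + 3)"
     "fst ((tm_step TM ^^ t') (to_nat (Start q1 (v1 0 = 1) :: 'a st), [inp w, tape1 cells'], [int 0, 0]))
        = to_nat (if acc_of q1 v1 w then Acc else Rej :: 'a st)"
     "\<forall>s \<le> t'. box (int (length w)) (int (length w) + 2)
        ((tm_step TM ^^ s) (to_nat (Start q1 (v1 0 = 1) :: 'a st), [inp w, tape1 cells'], [int 0, 0]))"
  proof -
    have ne: "cells' \<noteq> []" using S(2) by auto
    show ?thesis using main[OF S(1) q1 ne, where pos=0 and r=w and w=w] S(2) that by auto
  qed
  define t where "t = 1 + 4 + t'"
  have run: "tm_cfg TM w t = (tm_step TM ^^ t') ((tm_step TM ^^ 4) c1)"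
    unfolding tm_cfg_def t_def using fp[of "1 + 4" t' "tm_step TM" "tm_init TM w"] fp[of 1 4 "tm_step TM" "tm_init TM w"] c01
    by simp
  have acc: "acc_of q1 v1 w \<longleftrightarrow> w \<in> dva_lang k A"
    by (simp add: acc_of_def dva_lang_def dva_run_def dva_step_eq q1_def v1_def b0_def Let_def)
  have fst_t: "fst (tm_cfg TM w t) = to_nat (if w \<in> dva_lang k A then Acc else Rej :: 'a st)"
    using run S(3) T(2) acc by simp
  have tb: "t \<le> 40 * n ^ 3 + 40" using T(1) S(2) time_bound[of n] by (simp add: t_def n_def)
  have h1: "\<forall>s\<le>1. box (int n) (int n + 2) ((tm_step TM ^^ s) (tm_init TM w))"
  proof (intro allI impI)
    fix s :: nat assume "s \<le> 1"
    then have "s = 0 \<or> s = 1" by auto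
    then show "box (int n) (int n + 2) ((tm_step TM ^^ s) (tm_init TM w))"
      using c01 by (auto simp: c1_def box_def tm_init_def TM_def numeral_2_eq_2)
  qed
  have h2: "\<forall>s\<le>4. box (int n) (int n + 2) ((tm_step TM ^^ s) ((tm_step TM ^^ 1) (tm_init TM w)))"
    using S(4) c01 by (auto intro: hb_box)
  have h3: "\<forall>s\<le>t'. box (int n) (int n + 2) ((tm_step TM ^^ s) ((tm_step TM ^^ (1 + 4)) (tm_init TM w)))"
    using T(3) S(3) c01 fp[of 1 4 "tm_step TM" "tm_init TM w"] by (simp add: n_def)
  have hall: "\<forall>s\<le>t. box (int n) (int n + 2) (tm_cfg TM w s)"
    using range_comp[OF range_comp[OF h1 h2] h3] unfolding tm_cfg_def t_def by simp
  have sub: "{(i, snd (snd (tm_cfg TM w s)) ! i) | s i. s \<le> t \<and> i < tm_k TM}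
     \<subseteq> ({0} \<times> {0..int n}) \<union> ({1} \<times> {-1..int n + 2})"
  proof
    fix x assume "x \<in> {(i, snd (snd (tm_cfg TM w s)) ! i) | s i. s \<le> t \<and> i < tm_k TM}"
    then obtain s i where x: "x = (i, snd (snd (tm_cfg TM w s)) ! i)" "s \<le> t" "i < 2" by (auto simp: TM_def)
    obtain h0 h1 where "snd (snd (tm_cfg TM w s)) = [h0, h1]" "0 \<le> h0" "h0 \<le> int n" "-1 \<le> h1" "h1 \<le> int n + 2"
      using hall x(2) by (auto simp: box_def)
    moreover have "i = 0 \<or> i = 1" using x(3) by auto
    ultimately show "x \<in> ({0} \<times> {0..int n}) \<union> ({1} \<times> {-1..int n + 2})" using x(1) by auto
  qed
  have AR: "to_nat (Acc :: 'a st) \<noteq> to_nat (Rej :: 'a st)" by simp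
  show "\<exists>t. t \<le> 40 * length w ^ 3 + 40 \<and>
             fst (tm_cfg TM w t) \<in> {tm_acc TM, tm_rej TM} \<and>
             (fst (tm_cfg TM w t) = tm_acc TM) = (w \<in> dva_lang k A) \<and>
             card {(i, snd (snd (tm_cfg TM w s)) ! i) | s i. s \<le> t \<and> i < tm_k TM} \<le> 40 * length w + 40"
    apply (rule exI[of _ t])
    using tb fst_t AR space_card[OF sub] by (auto simp: TM_def n_def)
qed

end

theorem theorem8:
  shows "(\<Union>k\<in>{1..}. (rtDVA_langs k :: ('a::finite) list set set)) \<subseteq> TISP (\<lambda>n. n ^ 3) (\<lambda>n. n)"
proof
  fix L :: "'a list set"
  assume "L \<in> (\<Union>k\<in>{1..}. rtDVA_langs k)"
  then obtain k A where A: "rtDVA k A" "dva_lang k A = L" by (auto simp: rtDVA_langs_def)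
  interpret sim k A by standard (rule A(1))
  show "L \<in> TISP (\<lambda>n. n ^ 3) (\<lambda>n. n)"
    unfolding TISP_def using TM_wf decides A(2) by blast
qed


end
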